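(* Let $\mathcal{C}\subseteq\mathbb{R}^n$ be a nonempty closed convex set, $\theta^*\in\mathbb{R}^n$, $Z$ a random vector with $\mathbb{E}Z=0$ and $\mathbb{E}\|Z\|^2<\infty$, and for $\sigma>0$ let $Y=\theta^*+\sigma Z$ and $\hat\theta(Y)=\Pi_{\mathcal{C}}(Y)$. Suppose $$\sup_{x\in\mathbb{R}^n}\Big(\|\Pi_{F_{\mathcal{C}}(\Pi_{\mathcal{C}}(\theta^* ))}(x)\|^2-\|\Pi_{K_{\mathcal{C}}}(x)\|^2\Big)<\infty.$$ Then $$\lim_{\sigma\to\infty}\frac{1}{\sigma^2}M(\hat\theta,\theta^* )=\lim_{\sigma\to\infty}\frac{1}{\sigma^2}E(\hat\theta,\theta^* )=\delta(K_{\mathcal{C}}).$$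
   Context: $\Pi_S$ is Euclidean projection onto a closed convex set $S$. For $\theta_0\in\mathcal{C}$, $F_{\mathcal{C}}(\theta_0)=\{\theta-\theta_0:\theta\in\mathcal{C}\}$ and $T_{\mathcal{C}}(\theta_0)=\mathrm{cl}\{\alpha(\theta-\theta_0):\alpha\ge0,\theta\in\mathcal{C}\}$. The core cone is $K_{\mathcal{C}}=\bigcap_{\theta\in\mathcal{C}}T_{\mathcal{C}}(\theta)$. Misspecified risk: $M(\hat\theta,\theta^* )=\mathbb{E}\|\hat\theta(Y)-\Pi_{\mathcal{C}}(\theta^* )\|^2$; excess risk: $E(\hat\theta,\theta^* )=\mathbb{E}\|\hat\theta(Y)-\theta^*\|^2-\|\Pi_{\mathcal{C}}(\theta^* )-\theta^*\|^2$. For a closed convex cone $T$, $\delta(T)=\mathbb{E}\|\Pi_T(Z)\|^2$ (expectation over the distribution of $Z$). *)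

theory Defs
  imports "HOL-Analysis.Analysis" "HOL-Probability.Probability"
begin

abbreviation proj :: "'a::euclidean_space set \<Rightarrow> 'a \<Rightarrow> 'a" where
  "proj S x \<equiv> closest_point S x"

definition feasible_dirs :: "'a::euclidean_space set \<Rightarrow> 'a \<Rightarrow> 'a set" where
  "feasible_dirs C \<theta>0 = {\<theta> - \<theta>0 | \<theta>. \<theta> \<in> C}"

definition tangent_cone :: "'a::euclidean_space set \<Rightarrow> 'a \<Rightarrow> 'a set" where
  "tangent_cone C \<theta>0 = closure {\<alpha> *\<^sub>R (\<theta> - \<theta>0) | \<alpha> \<theta>. \<alpha> \<ge> 0 \<and> \<theta> \<in> C}"

definition core_cone :: "'a::euclidean_space set \<Rightarrow> 'a set" where
  "core_cone C = (\<Inter>\<theta>\<in>C. tangent_cone C \<theta>)"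

end

theory Submission
  imports Defs
begin

definition rcone :: "'a::euclidean_space set \<Rightarrow> 'a set" where
  "rcone C = {d. \<forall>\<theta>\<in>C. \<forall>t\<ge>0. \<theta> + t *\<^sub>R d \<in> C}"

lemma tangent_cone_halfspace:
  fixes C :: "'a::euclidean_space set"
  assumes "convex C" "closed C" "p = closest_point C x" "C \<noteq> {}"
  shows "tangent_cone C p \<subseteq> {v. inner (x - p) v \<le> 0}"
  unfolding tangent_cone_def
proof (rule closure_minimal)
  show "closed {v. inner (x - p) v \<le> 0}" by (rule closed_halfspace_le)
  show "{(\<alpha>::real) *\<^sub>R (\<theta> - p) |\<alpha> \<theta>. 0 \<le> \<alpha> \<and> \<theta> \<in> C} \<subseteq> {v. inner (x - p) v \<le> 0}"
  proof clarify
    fix \<alpha> :: real and \<theta> assume "0 \<le> \<alpha>" "\<theta> \<in> C"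
    have "inner (x - p) (\<theta> - p) \<le> 0" using closest_point_dot[OF assms(1,2) \<open>\<theta>\<in>C\<close>] assms(3) by simp
    then show "inner (x - p) (\<alpha> *\<^sub>R (\<theta> - p)) \<le> 0" using \<open>0\<le>\<alpha>\<close>
      by (simp add: mult_nonneg_nonpos)
  qed
qed

lemma core_cone_eq:
  fixes C :: "'a::euclidean_space set"
  assumes "convex C" "closed C" "C \<noteq> {}"
  shows "core_cone C = rcone C"
proof
  show "rcone C \<subseteq> core_cone C"
  proof
    fix d assume d: "d \<in> rcone C"
    show "d \<in> core_cone C" unfolding core_cone_def
    proof
      fix \<theta> assume "\<theta> \<in> C"
      then have "\<forall>t\<ge>0. \<theta> + t *\<^sub>R d \<in> C" using d unfolding rcone_def by blast
      then have td: "\<theta> + 1 *\<^sub>R d \<in> C" by (rule allE[of _ 1]) simp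
      have "d = 1 *\<^sub>R ((\<theta> + d) - \<theta>) \<and> (0::real) \<le> 1 \<and> \<theta> + d \<in> C" using td by simp
      then have "\<exists>\<alpha> \<theta>'. d = \<alpha> *\<^sub>R (\<theta>' - \<theta>) \<and> (0::real) \<le> \<alpha> \<and> \<theta>' \<in> C" by blast
      then have "d \<in> {\<alpha> *\<^sub>R (\<theta>' - \<theta>) |\<alpha> \<theta>'. 0 \<le> \<alpha> \<and> \<theta>' \<in> C}"
        unfolding mem_Collect_eq .
      then show "d \<in> tangent_cone C \<theta>" unfolding tangent_cone_def
        by (rule subsetD[OF closure_subset])
    qed
  qed
next
  show "core_cone C \<subseteq> rcone C"
  proof
    fix d assume d: "d \<in> core_cone C"
    show "d \<in> rcone C" unfolding rcone_def
    proof (intro CollectI ballI allI impI)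
      fix \<theta> t assume th: "\<theta> \<in> C" and t: "(0::real) \<le> t"
      define x where "x = \<theta> + t *\<^sub>R d"
      define p where "p = closest_point C x"
      have pC: "p \<in> C" unfolding p_def by (rule closest_point_in_set[OF assms(2,3)])
      have "d \<in> tangent_cone C p" using d pC unfolding core_cone_def by blast
      then have 1: "inner (x - p) d \<le> 0" using tangent_cone_halfspace[OF assms(1,2) p_def assms(3)] by blast
      have 2: "inner (x - p) (\<theta> - p) \<le> 0" using closest_point_dot[OF assms(1,2) th] p_def by simp
      have "inner (x - p) (x - p) = inner (x - p) (\<theta> - p) + t * inner (x - p) d"
        unfolding x_def by (simp add: inner_diff_right inner_add_right algebra_simps)
      also have "\<dots> \<le> 0" using 1 2 t by (simp add: add_nonpos_nonpos mult_nonneg_nonpos)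
      finally have "inner (x - p) (x - p) \<le> 0" .
      then have "inner (x - p) (x - p) = 0" using inner_ge_zero[of "x - p"] by linarith
      then have "x = p" by simp
      then show "\<theta> + t *\<^sub>R d \<in> C" using pC x_def by simp
    qed
  qed
qed

lemma rcone_convex: "convex C \<Longrightarrow> convex (rcone C)"
proof (rule convexI)
  fix x y u v assume c: "convex C" and x: "x \<in> rcone C" and y: "y \<in> rcone C"
    and uv: "0 \<le> u" "0 \<le> v" "u + v = (1::real)"
  show "u *\<^sub>R x + v *\<^sub>R y \<in> rcone C" unfolding rcone_def
  proof (intro CollectI ballI allI impI)
    fix \<theta> t assume th: "\<theta> \<in> C" and t: "(0::real) \<le> t"
    have a: "\<theta> + t *\<^sub>R x \<in> C" "\<theta> + t *\<^sub>R y \<in> C" using x y th t unfolding rcone_def by auto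
    have "u *\<^sub>R (\<theta> + t *\<^sub>R x) + v *\<^sub>R (\<theta> + t *\<^sub>R y) \<in> C"
      using convexD[OF c a uv] .
    moreover have "u *\<^sub>R (\<theta> + t *\<^sub>R x) + v *\<^sub>R (\<theta> + t *\<^sub>R y) = (u + v) *\<^sub>R \<theta> + t *\<^sub>R (u *\<^sub>R x + v *\<^sub>R y)"
      by (simp add: algebra_simps)
    ultimately show "\<theta> + t *\<^sub>R (u *\<^sub>R x + v *\<^sub>R y) \<in> C" using uv(3) by simp
  qed
qed

lemma rcone_closed: "closed C \<Longrightarrow> closed (rcone C)"
proof -
  assume cl: "closed C"
  have "rcone C = (\<Inter>\<theta>\<in>C. \<Inter>t\<in>{0..}. (\<lambda>d. \<theta> + t *\<^sub>R d) -` C)"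
    unfolding rcone_def by auto
  moreover have "closed ((\<lambda>d. \<theta> + t *\<^sub>R d) -` C)" for \<theta> and t :: real
    by (rule closed_vimage[OF cl]) (intro continuous_intros)
  ultimately show ?thesis by (auto intro!: closed_INT)
qed

lemma rcone_zero: "0 \<in> rcone C" unfolding rcone_def by simp


lemma scale_ineq:
  fixes g z q w :: "'a::real_inner"
  assumes "\<sigma> > 0" "inner (\<sigma> *\<^sub>R (z + inverse \<sigma> *\<^sub>R w - g)) (\<sigma> *\<^sub>R (q - g)) \<le> 0"
  shows "inner (z + inverse \<sigma> *\<^sub>R w - g) (q - g) \<le> 0"
proof -
  have "inner (\<sigma> *\<^sub>R (z + inverse \<sigma> *\<^sub>R w - g)) (\<sigma> *\<^sub>R (q - g)) = (\<sigma> * \<sigma>) * inner (z + inverse \<sigma> *\<^sub>R w - g) (q - g)"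
    by simp
  with assms show ?thesis by (simp add: mult_le_0_iff)
qed

locale projsetup =
  fixes C :: "'a::euclidean_space set" and \<theta>s :: 'a
  assumes ne: "C \<noteq> {}" and cl: "closed C" and cv: "convex C"
begin

definition "\<theta>0 = closest_point C \<theta>s"
definition "g \<sigma> z = inverse \<sigma> *\<^sub>R (closest_point C (\<theta>s + \<sigma> *\<^sub>R z) - \<theta>0)"

lemma P_eq: "\<sigma> > 0 \<Longrightarrow> closest_point C (\<theta>s + \<sigma> *\<^sub>R z) = \<theta>0 + \<sigma> *\<^sub>R g \<sigma> z"
  unfolding g_def by simp

lemma g_bound: "\<sigma> > 0 \<Longrightarrow> norm (g \<sigma> z) \<le> norm z"
proof -
  assume s: "\<sigma> > 0"
  have "dist (closest_point C (\<theta>s + \<sigma> *\<^sub>R z)) (closest_point C \<theta>s) \<le> dist (\<theta>s + \<sigma> *\<^sub>R z) \<theta>s"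
    by (rule closest_point_lipschitz[OF cv cl ne])
  then have "norm (\<sigma> *\<^sub>R g \<sigma> z) \<le> \<sigma> * norm z"
    using s by (simp add: P_eq dist_norm \<theta>0_def[symmetric])
  then show ?thesis using s by simp
qed

lemma g_conv: "((\<lambda>\<sigma>. g \<sigma> z) \<longlongrightarrow> closest_point (rcone C) z) at_top"
proof (rule ccontr)
  define q where "q = closest_point (rcone C) z"
  define w where "w = \<theta>s - \<theta>0"
  have Rcv: "convex (rcone C)" and Rcl: "closed (rcone C)" and Rne: "rcone C \<noteq> {}"
    using rcone_convex[OF cv] rcone_closed[OF cl] rcone_zero by auto
  have qR: "q \<in> rcone C" unfolding q_def using closest_point_in_set[OF Rcl Rne] .
  have th0C: "\<theta>0 \<in> C" unfolding \<theta>0_def using closest_point_in_set[OF cl ne] .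
  assume "\<not> ((\<lambda>\<sigma>. g \<sigma> z) \<longlongrightarrow> closest_point (rcone C) z) at_top"
  then have "\<not> ((\<lambda>\<sigma>. g \<sigma> z) \<longlongrightarrow> q) at_top" unfolding q_def .
  then have "\<exists>\<epsilon>>0. \<not> (\<forall>\<^sub>F \<sigma> in at_top. dist (g \<sigma> z) q < \<epsilon>)" unfolding tendsto_iff by simp
  then obtain \<epsilon> where ep: "\<epsilon> > 0" and ne1: "\<not> (\<forall>\<^sub>F \<sigma> in at_top. dist (g \<sigma> z) q < \<epsilon>)"
    by blast
  have "\<forall>N. \<exists>\<sigma>\<ge>N. dist (g \<sigma> z) q \<ge> \<epsilon>"
  proof
    fix N :: real
    show "\<exists>\<sigma>\<ge>N. \<epsilon> \<le> dist (g \<sigma> z) q"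
    proof (rule ccontr)
      assume "\<not> ?thesis"
      then have "\<forall>\<sigma>\<ge>N. dist (g \<sigma> z) q < \<epsilon>" using leD by (auto simp: not_le)
      then have "\<forall>\<^sub>F \<sigma> in at_top. dist (g \<sigma> z) q < \<epsilon>" unfolding eventually_at_top_linorder by blast
      with ne1 show False by blast
    qed
  qed
  then have "\<forall>n::nat. \<exists>\<sigma>. \<sigma> \<ge> real n + 1 \<and> dist (g \<sigma> z) q \<ge> \<epsilon>" by blast
  from choice[OF this] obtain s where s0: "\<forall>n. s n \<ge> real n + 1 \<and> dist (g (s n) z) q \<ge> \<epsilon>" by blast
  have s: "\<And>n. s n \<ge> real n + 1" "\<And>n. dist (g (s n) z) q \<ge> \<epsilon>" using s0 by auto
  have spos: "s n > 0" for n
  proof -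
    have "real n + 1 > 0" by simp
    then show ?thesis using s(1)[of n] by linarith
  qed
  have "bounded (range (\<lambda>n. g (s n) z))"
    unfolding bounded_iff using g_bound[OF spos] by auto
  from bounded_imp_convergent_subsequence[OF this]
  obtain l r where r: "strict_mono (r::nat\<Rightarrow>nat)" and lim: "((\<lambda>n. g (s n) z) \<circ> r) \<longlonglongrightarrow> l"
    by blast
  define \<sigma> where "\<sigma> n = s (r n)" for n
  define h where "h n = g (\<sigma> n) z" for n
  have hl: "h \<longlonglongrightarrow> l" using lim unfolding h_def \<sigma>_def o_def .
  have sig: "\<sigma> n \<ge> real n + 1" for n
  proof -
    have "real n \<le> real (r n)" using seq_suble[OF r, of n] by simp
    then show ?thesis using s(1)[of "r n"] unfolding \<sigma>_def by linarith
  qed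
  have sigpos: "\<sigma> n > 0" for n unfolding \<sigma>_def using spos .
  have sigtop: "filterlim \<sigma> at_top sequentially"
  proof -
    have sn: "real n \<le> \<sigma> n" for n using sig[of n] by linarith
    show ?thesis by (rule filterlim_at_top_mono[OF filterlim_real_sequentially]) (simp add: sn)
  qed
  have inv0: "(\<lambda>n. inverse (\<sigma> n)) \<longlonglongrightarrow> 0"
    by (rule tendsto_inverse_0_at_top[OF sigtop])
  have Peq: "closest_point C (\<theta>s + \<sigma> n *\<^sub>R z) = \<theta>0 + \<sigma> n *\<^sub>R h n" for n
    unfolding h_def using P_eq[OF sigpos] .
  have step1: "\<theta>0 + t *\<^sub>R l \<in> C" if t: "t \<ge> 0" for t
  proof (rule Lim_in_closed_set[OF cl])
    show "(\<lambda>n. \<theta>0 + t *\<^sub>R h n) \<longlonglongrightarrow> \<theta>0 + t *\<^sub>R l" by (intro tendsto_intros hl)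
    show "sequentially \<noteq> bot" by simp
    obtain N :: nat where N: "t \<le> real N" using real_arch_simple by blast
    show "\<forall>\<^sub>F n in sequentially. \<theta>0 + t *\<^sub>R h n \<in> C"
      unfolding eventually_sequentially
    proof (intro exI allI impI)
      fix n assume "N \<le> n"
      then have "real N \<le> real n" by simp
      then have tl: "t \<le> \<sigma> n" using N sig[of n] by linarith
      define u where "u = t / \<sigma> n"
      have u: "0 \<le> u" "u \<le> 1" unfolding u_def using tl t sigpos[of n] by auto
      have PC: "\<theta>0 + \<sigma> n *\<^sub>R h n \<in> C" using Peq[of n] closest_point_in_set[OF cl ne, of "\<theta>s + \<sigma> n *\<^sub>R z"] by simp
      have "(1 - u) *\<^sub>R \<theta>0 + u *\<^sub>R (\<theta>0 + \<sigma> n *\<^sub>R h n) \<in> C"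
        using convexD[OF cv th0C PC, of "1 - u" u] u by auto
      moreover have "(1 - u) *\<^sub>R \<theta>0 + u *\<^sub>R (\<theta>0 + \<sigma> n *\<^sub>R h n) = \<theta>0 + t *\<^sub>R h n"
        unfolding u_def using sigpos[of n] by (simp add: algebra_simps)
      ultimately show "\<theta>0 + t *\<^sub>R h n \<in> C" by simp
    qed
  qed
  have lR: "l \<in> rcone C" unfolding rcone_def
  proof (intro CollectI ballI allI impI)
    fix \<theta> t assume th: "\<theta> \<in> C" and t: "(0::real) \<le> t"
    define e where "e n = inverse (real (Suc n))" for n
    have e0: "e \<longlonglongrightarrow> 0" unfolding e_def by (rule LIMSEQ_inverse_real_of_nat)
    show "\<theta> + t *\<^sub>R l \<in> C"
    proof (rule Lim_in_closed_set[OF cl])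
      show "(\<lambda>n. \<theta> + e n *\<^sub>R (\<theta>0 - \<theta>) + t *\<^sub>R l) \<longlonglongrightarrow> \<theta> + t *\<^sub>R l"
      proof -
        have "(\<lambda>n. \<theta> + e n *\<^sub>R (\<theta>0 - \<theta>) + t *\<^sub>R l) \<longlonglongrightarrow> \<theta> + 0 *\<^sub>R (\<theta>0 - \<theta>) + t *\<^sub>R l"
          by (intro tendsto_intros e0)
        then show ?thesis by simp
      qed
      show "sequentially \<noteq> bot" by simp
      show "\<forall>\<^sub>F n in sequentially. \<theta> + e n *\<^sub>R (\<theta>0 - \<theta>) + t *\<^sub>R l \<in> C"
      proof (rule always_eventually, rule allI)
        fix n
        have ep: "e n > 0" "e n \<le> 1" unfolding e_def by (auto simp: inverse_le_1_iff)
        have A: "\<theta>0 + (t / e n) *\<^sub>R l \<in> C" using step1 t ep by simp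
        have "(1 - e n) *\<^sub>R \<theta> + e n *\<^sub>R (\<theta>0 + (t / e n) *\<^sub>R l) \<in> C"
          using convexD[OF cv th A, of "1 - e n" "e n"] ep by auto
        moreover have "(1 - e n) *\<^sub>R \<theta> + e n *\<^sub>R (\<theta>0 + (t / e n) *\<^sub>R l) = \<theta> + e n *\<^sub>R (\<theta>0 - \<theta>) + t *\<^sub>R l"
          using ep by (simp add: algebra_simps)
        ultimately show "\<theta> + e n *\<^sub>R (\<theta>0 - \<theta>) + t *\<^sub>R l \<in> C" by simp
      qed
    qed
  qed
  have ineq_n: "inner (z + inverse (\<sigma> n) *\<^sub>R w - h n) (q - h n) \<le> 0" for n
  proof (rule scale_ineq[OF sigpos])
    have cC: "\<theta>0 + \<sigma> n *\<^sub>R q \<in> C" using qR th0C sigpos[of n] unfolding rcone_def by auto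
    have "inner ((\<theta>s + \<sigma> n *\<^sub>R z) - closest_point C (\<theta>s + \<sigma> n *\<^sub>R z)) ((\<theta>0 + \<sigma> n *\<^sub>R q) - closest_point C (\<theta>s + \<sigma> n *\<^sub>R z)) \<le> 0"
      by (rule closest_point_dot[OF cv cl cC])
    moreover have "(\<theta>s + \<sigma> n *\<^sub>R z) - closest_point C (\<theta>s + \<sigma> n *\<^sub>R z) = \<sigma> n *\<^sub>R (z + inverse (\<sigma> n) *\<^sub>R w - h n)"
      unfolding Peq w_def using sigpos[of n] by (simp add: algebra_simps)
    moreover have "(\<theta>0 + \<sigma> n *\<^sub>R q) - closest_point C (\<theta>s + \<sigma> n *\<^sub>R z) = \<sigma> n *\<^sub>R (q - h n)"
      unfolding Peq by (simp add: algebra_simps)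
    ultimately show "inner (\<sigma> n *\<^sub>R (z + inverse (\<sigma> n) *\<^sub>R w - h n)) (\<sigma> n *\<^sub>R (q - h n)) \<le> 0" by simp
  qed
  have "(\<lambda>n. inner (z + inverse (\<sigma> n) *\<^sub>R w - h n) (q - h n)) \<longlonglongrightarrow> inner (z + 0 *\<^sub>R w - l) (q - l)"
    by (intro tendsto_intros hl inv0)
  then have s3: "inner (z - l) (q - l) \<le> 0"
    using ineq_n by (simp add: LIMSEQ_le_const2)
  have s4: "inner (z - q) (l - q) \<le> 0"
    unfolding q_def by (rule closest_point_dot[OF Rcv Rcl lR])
  have "inner (q - l) (q - l) = inner (z - l) (q - l) + inner (z - q) (l - q)"
    by (simp add: inner_diff_left inner_diff_right inner_commute)
  also have "\<dots> \<le> 0" using s3 s4 by simp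
  finally have "inner (q - l) (q - l) \<le> 0" .
  then have "inner (q - l) (q - l) = 0" using inner_ge_zero[of "q - l"] by linarith
  then have "l = q" by simp
  then have "\<forall>\<^sub>F n in sequentially. dist (h n) q < \<epsilon>" using hl ep unfolding tendsto_iff by blast
  then obtain n where "dist (h n) q < \<epsilon>" using eventually_sequentially by auto
  moreover have "dist (h n) q \<ge> \<epsilon>" unfolding h_def \<sigma>_def using s(2) .
  ultimately show False by simp
qed

end


lemma bound_ineq:
  fixes a b n i c k :: real
  assumes "0 \<le> a" "a \<le> b" "\<bar>i\<bar> \<le> a * n" "\<bar>c\<bar> \<le> k" and n: "0 \<le> n"
  shows "\<bar>a\<^sup>2 - c * i\<bar> \<le> b\<^sup>2 + k * (b * n)"
proof -
  have "\<bar>c * i\<bar> = \<bar>c\<bar> * \<bar>i\<bar>" by (simp add: abs_mult)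
  also have "\<dots> \<le> k * (a * n)" using assms by (intro mult_mono) auto
  also have "\<dots> \<le> k * (b * n)" using assms n by (intro mult_left_mono mult_right_mono) auto
  finally have 1: "\<bar>c * i\<bar> \<le> k * (b * n)" .
  have "a\<^sup>2 \<le> b\<^sup>2" by (rule power_mono[OF assms(2,1)])
  then show ?thesis using 1 by (smt (verit) zero_le_power2)
qed

theorem proposition3:
  fixes C :: "(real ^ 'n) set" and \<theta>s :: "real ^ 'n"
    and M :: "'w measure" and Z :: "'w \<Rightarrow> real ^ 'n"
  assumes "C \<noteq> {}" and "closed C" and "convex C"
    and "prob_space M"
    and "Z \<in> borel_measurable M"
    and "integrable M Z"
    and "integral\<^sup>L M Z = 0"
    and "integrable M (\<lambda>\<omega>. (norm (Z \<omega>))\<^sup>2)"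
    and "bdd_above ((\<lambda>x. (norm (proj (feasible_dirs C (proj C \<theta>s)) x))\<^sup>2
                         - (norm (proj (core_cone C) x))\<^sup>2) ` UNIV)"
  shows "((\<lambda>\<sigma>::real. integral\<^sup>L M (\<lambda>\<omega>. (norm (proj C (\<theta>s + \<sigma> *\<^sub>R Z \<omega>) - proj C \<theta>s))\<^sup>2) / \<sigma>\<^sup>2)
            \<longlongrightarrow> integral\<^sup>L M (\<lambda>\<omega>. (norm (proj (core_cone C) (Z \<omega>)))\<^sup>2)) at_top \<and>
         ((\<lambda>\<sigma>::real. (integral\<^sup>L M (\<lambda>\<omega>. (norm (proj C (\<theta>s + \<sigma> *\<^sub>R Z \<omega>) - \<theta>s))\<^sup>2)
                        - (norm (proj C \<theta>s - \<theta>s))\<^sup>2) / \<sigma>\<^sup>2)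
            \<longlongrightarrow> integral\<^sup>L M (\<lambda>\<omega>. (norm (proj (core_cone C) (Z \<omega>)))\<^sup>2)) at_top"
proof -
  interpret projsetup C \<theta>s using assms(1-3) by unfold_locales auto
  interpret prob_space M by (rule assms(4))
  have K: "core_cone C = rcone C" by (rule core_cone_eq[OF cv cl ne])
  have Zm[measurable]: "Z \<in> borel_measurable M" by (rule assms(5))
  have cpC[measurable]: "closest_point C \<in> borel_measurable borel"
    by (rule borel_measurable_continuous_onI[OF continuous_on_closest_point[OF cv cl ne]])
  have Rcv: "convex (rcone C)" and Rcl: "closed (rcone C)" and Rne: "rcone C \<noteq> {}"
    using rcone_convex[OF cv] rcone_closed[OF cl] rcone_zero by auto
  have cpR[measurable]: "closest_point (rcone C) \<in> borel_measurable borel"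
    by (rule borel_measurable_continuous_onI[OF continuous_on_closest_point[OF Rcv Rcl Rne]])
  define w where "w = \<theta>s - \<theta>0"
  define q where "q \<omega> = closest_point (rcone C) (Z \<omega>)" for \<omega>
  define h where "h c \<sigma> \<omega> = (norm (g \<sigma> (Z \<omega>)))\<^sup>2 - c / \<sigma> * inner (g \<sigma> (Z \<omega>)) w" for c \<sigma> \<omega>
  define B where "B k \<omega> = (norm (Z \<omega>))\<^sup>2 + k * (norm (Z \<omega>) * norm w)" for k \<omega>
  have hm[measurable]: "h c \<sigma> \<in> borel_measurable M" for c \<sigma>
    unfolding h_def g_def by measurable
  have Bi: "integrable M (B k)" for k
  proof -
    have nZ: "integrable M (\<lambda>\<omega>. norm (Z \<omega>))" using assms(6) by (rule integrable_norm)
    then have "integrable M (\<lambda>\<omega>. k * (norm (Z \<omega>) * norm w))" by simp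
    then show ?thesis unfolding B_def by (rule Bochner_Integration.integrable_add[OF assms(8)])
  qed
  have hB: "\<bar>h c \<sigma> \<omega>\<bar> \<le> B k \<omega>" if "\<sigma> > 0" "\<bar>c / \<sigma>\<bar> \<le> k" for c \<sigma> \<omega> k
    unfolding h_def B_def
    by (rule bound_ineq[OF norm_ge_zero g_bound[OF that(1)] Cauchy_Schwarz_ineq2 that(2) norm_ge_zero])
  have hi: "integrable M (h c \<sigma>)" if "\<sigma> > 0" for c \<sigma>
  proof (rule Bochner_Integration.integrable_bound[OF Bi[of "\<bar>c / \<sigma>\<bar>"] hm])
    show "AE x in M. norm (h c \<sigma> x) \<le> norm (B \<bar>c / \<sigma>\<bar> x)"
      using hB[OF that order_refl] by (auto intro!: AE_I2 order_trans[OF _ abs_ge_self])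
  qed
  have DC: "((\<lambda>\<sigma>. integral\<^sup>L M (h c \<sigma>)) \<longlongrightarrow> integral\<^sup>L M (\<lambda>\<omega>. (norm (q \<omega>))\<^sup>2)) at_top" for c
  proof (rule integral_dominated_convergence_at_top[where w="B \<bar>c\<bar>"])
    show "(\<lambda>\<omega>. (norm (q \<omega>))\<^sup>2) \<in> borel_measurable M" unfolding q_def by measurable
    show "h c \<sigma> \<in> borel_measurable M" for \<sigma> by (rule hm)
    show "integrable M (B \<bar>c\<bar>)" by (rule Bi)
    show "AE x in M. ((\<lambda>i. h c i x) \<longlongrightarrow> (norm (q x))\<^sup>2) at_top"
    proof (rule AE_I2)
      fix x
      have "((\<lambda>i. (norm (g i (Z x)))\<^sup>2 - c * inverse i * inner (g i (Z x)) w) \<longlongrightarrow> (norm (q x))\<^sup>2 - c * 0 * inner (q x) w) at_top"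
        unfolding q_def by (intro tendsto_intros g_conv tendsto_inverse_0_at_top filterlim_ident)
      then show "((\<lambda>i. h c i x) \<longlongrightarrow> (norm (q x))\<^sup>2) at_top"
        unfolding h_def by (simp add: divide_inverse)
    qed
    show "\<forall>\<^sub>F i in at_top. AE x in M. norm (h c i x) \<le> B \<bar>c\<bar> x"
      using eventually_ge_at_top[of "1::real"]
    proof eventually_elim
      case (elim \<sigma>)
      have "\<bar>c / \<sigma>\<bar> \<le> \<bar>c\<bar>" proof -
        have "\<bar>c / \<sigma>\<bar> = \<bar>c\<bar> / \<sigma>" using elim by simp
        also have "\<dots> \<le> \<bar>c\<bar> / 1" using elim by (intro divide_left_mono) auto
        finally show ?thesis by simp
      qed
      then show ?case using hB[of \<sigma> c "\<bar>c\<bar>"] elim by (auto intro!: AE_I2)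
    qed
  qed
  have qK: "(\<lambda>\<omega>. (norm (proj (core_cone C) (Z \<omega>)))\<^sup>2) = (\<lambda>\<omega>. (norm (q \<omega>))\<^sup>2)"
    unfolding K q_def ..
  have th0: "proj C \<theta>s = \<theta>0" unfolding \<theta>0_def ..
  have E1: "\<forall>\<^sub>F \<sigma> in at_top. integral\<^sup>L M (h 0 \<sigma>) = integral\<^sup>L M (\<lambda>\<omega>. (norm (proj C (\<theta>s + \<sigma> *\<^sub>R Z \<omega>) - \<theta>0))\<^sup>2) / \<sigma>\<^sup>2"
    using eventually_gt_at_top[of "0::real"]
  proof eventually_elim
    case (elim \<sigma>)
    have fe: "(\<lambda>\<omega>. (norm (proj C (\<theta>s + \<sigma> *\<^sub>R Z \<omega>) - \<theta>0))\<^sup>2) = (\<lambda>\<omega>. \<sigma>\<^sup>2 * h 0 \<sigma> \<omega>)"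
    proof (rule ext)
      fix \<omega>
      have d: "proj C (\<theta>s + \<sigma> *\<^sub>R Z \<omega>) - \<theta>0 = \<sigma> *\<^sub>R g \<sigma> (Z \<omega>)"
        using P_eq[OF elim, of "Z \<omega>"] by simp
      have "(norm (\<sigma> *\<^sub>R g \<sigma> (Z \<omega>)))\<^sup>2 = \<sigma>\<^sup>2 * (norm (g \<sigma> (Z \<omega>)))\<^sup>2"
        by (simp add: power_mult_distrib)
      then show "(norm (proj C (\<theta>s + \<sigma> *\<^sub>R Z \<omega>) - \<theta>0))\<^sup>2 = \<sigma>\<^sup>2 * h 0 \<sigma> \<omega>"
        unfolding d h_def by simp
    qed
    have "integral\<^sup>L M (\<lambda>\<omega>. \<sigma>\<^sup>2 * h 0 \<sigma> \<omega>) = \<sigma>\<^sup>2 * integral\<^sup>L M (h 0 \<sigma>)"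
      by (rule integral_mult_right_zero)
    then show ?case unfolding fe using elim by simp
  qed
  have E2: "\<forall>\<^sub>F \<sigma> in at_top. integral\<^sup>L M (h 2 \<sigma>) = (integral\<^sup>L M (\<lambda>\<omega>. (norm (proj C (\<theta>s + \<sigma> *\<^sub>R Z \<omega>) - \<theta>s))\<^sup>2) - (norm (\<theta>0 - \<theta>s))\<^sup>2) / \<sigma>\<^sup>2"
    using eventually_gt_at_top[of "0::real"]
  proof eventually_elim
    case (elim \<sigma>)
    have pt: "(norm (proj C (\<theta>s + \<sigma> *\<^sub>R Z \<omega>) - \<theta>s))\<^sup>2 = \<sigma>\<^sup>2 * h 2 \<sigma> \<omega> + (norm w)\<^sup>2" for \<omega>
    proof -
      define G where "G = g \<sigma> (Z \<omega>)"
      have e: "proj C (\<theta>s + \<sigma> *\<^sub>R Z \<omega>) - \<theta>s = \<sigma> *\<^sub>R G - w"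
        using P_eq[OF elim, of "Z \<omega>"] unfolding w_def G_def by (simp add: algebra_simps)
      have 1: "inner (\<sigma> *\<^sub>R G - w) (\<sigma> *\<^sub>R G - w) = \<sigma> * \<sigma> * inner G G - 2 * \<sigma> * inner G w + inner w w"
        by (simp add: inner_diff_left inner_diff_right inner_commute algebra_simps)
      have 2: "\<sigma> * \<sigma> * (2 / \<sigma> * inner G w) = 2 * \<sigma> * inner G w" using elim by simp
      have gg: "inner G G = (norm G)\<^sup>2" "inner w w = (norm w)\<^sup>2"
        by (simp_all add: dot_square_norm)
      have hh: "h 2 \<sigma> \<omega> = (norm G)\<^sup>2 - 2 / \<sigma> * inner G w" unfolding h_def G_def ..
      have "(norm (proj C (\<theta>s + \<sigma> *\<^sub>R Z \<omega>) - \<theta>s))\<^sup>2 = inner (\<sigma> *\<^sub>R G - w) (\<sigma> *\<^sub>R G - w)"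
        unfolding e by (rule power2_norm_eq_inner)
      also have "\<dots> = \<sigma> * \<sigma> * inner G G - 2 * \<sigma> * inner G w + inner w w" by (rule 1)
      also have "\<dots> = \<sigma> * \<sigma> * inner G G - \<sigma> * \<sigma> * (2 / \<sigma> * inner G w) + inner w w" by (simp only: 2)
      also have "\<dots> = \<sigma>\<^sup>2 * ((norm G)\<^sup>2 - 2 / \<sigma> * inner G w) + (norm w)\<^sup>2"
        unfolding gg power2_eq_square by (simp only: right_diff_distrib)
      also have "\<dots> = \<sigma>\<^sup>2 * h 2 \<sigma> \<omega> + (norm w)\<^sup>2" unfolding hh ..
      finally show ?thesis .
    qed
    have "integral\<^sup>L M (\<lambda>\<omega>. (norm (proj C (\<theta>s + \<sigma> *\<^sub>R Z \<omega>) - \<theta>s))\<^sup>2) = integral\<^sup>L M (\<lambda>\<omega>. \<sigma>\<^sup>2 * h 2 \<sigma> \<omega> + (norm w)\<^sup>2)"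
      unfolding pt ..
    also have "\<dots> = integral\<^sup>L M (\<lambda>\<omega>. \<sigma>\<^sup>2 * h 2 \<sigma> \<omega>) + integral\<^sup>L M (\<lambda>\<omega>. (norm w)\<^sup>2)"
      by (rule Bochner_Integration.integral_add) (use hi[OF elim] in auto)
    also have "\<dots> = \<sigma>\<^sup>2 * integral\<^sup>L M (h 2 \<sigma>) + (norm w)\<^sup>2"
      by (simp add: prob_space)
    finally have I: "integral\<^sup>L M (\<lambda>\<omega>. (norm (proj C (\<theta>s + \<sigma> *\<^sub>R Z \<omega>) - \<theta>s))\<^sup>2) = \<sigma>\<^sup>2 * integral\<^sup>L M (h 2 \<sigma>) + (norm w)\<^sup>2" .
    have nw: "norm (\<theta>0 - \<theta>s) = norm w" unfolding w_def by (rule norm_minus_commute)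
    show ?case unfolding I nw using elim by simp
  qed
  show ?thesis unfolding qK th0
    by (rule conjI[OF Lim_transform_eventually[OF DC[of 0] E1] Lim_transform_eventually[OF DC[of 2] E2]])
qed

end
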